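(* Let $A,B\in S(4,\mathbb{R})$, let $\{v_1,v_2,v_3,v_4\}$ be a symplectic basis for $A$ and $\{w_1,w_2,w_3,w_4\}$ a symplectic basis for $B$. If the basis-values of these two bases are equal, i.e. $(v_1^TJv_2, v_1^TJv_3, v_1^TJv_4, v_2^TJv_3, v_2^TJv_4, v_3^TJv_4) = (w_1^TJw_2, w_1^TJw_3, w_1^TJw_4, w_2^TJw_3, w_2^TJw_4, w_3^TJw_4)$, then there exists $P\in\operatorname{Sp}(4)$ with $A = P^T B P$.
   Context: $S(4,\mathbb{R})$ is the set of invertible skew-symmetric real $4\times4$ matrices; $J = \operatorname{diag}(J_0,J_0)$ with $J_0 = \begin{bmatrix} 0 & 1 \\ -1 & 0\end{bmatrix}$; $\operatorname{Sp}(4) = \{P : P^TJP = J\}$. A basis $\{v_1,v_2,v_3,v_4\}$ of $\mathbb{R}^4$ is a symplectic basis for $A$ if $v_1^TAv_2 = 1$, $v_1^TAv_3 = 0$, $v_1^TAv_4 = 0$, $v_2^TAv_3 = 0$, $v_2^TAv_4 = 0$, $v_3^TAv_4 = 1$. *)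

theory Defs
  imports "HOL-Analysis.Analysis"
begin

text \<open>Real 4x4 matrices are rendered as real^4^4; coordinates are indexed by the
numerals 1,2,3,4 of the finite type 4 (in which 4 = 0, but 1,2,3,4 are distinct).\<close>

definition bform :: "real^4^4 \<Rightarrow> real^4 \<Rightarrow> real^4 \<Rightarrow> real" where
  "bform M x y = x \<bullet> (M *v y)"

definition S4 :: "(real^4^4) set" where
  "S4 = {A. transpose A = - A \<and> invertible A}"

definition Jmat :: "real^4^4" where
  "Jmat = (\<chi> i j. if (i = 1 \<and> j = 2) \<or> (i = 3 \<and> j = 4) then 1
                 else if (i = 2 \<and> j = 1) \<or> (i = 4 \<and> j = 3) then -1 else 0)"

definition Sp4 :: "(real^4^4) set" where
  "Sp4 = {P. transpose P ** Jmat ** P = Jmat}"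

definition is_basis4 :: "real^4 \<Rightarrow> real^4 \<Rightarrow> real^4 \<Rightarrow> real^4 \<Rightarrow> bool" where
  "is_basis4 v1 v2 v3 v4 \<longleftrightarrow> card {v1, v2, v3, v4} = 4 \<and>
     independent {v1, v2, v3, v4} \<and> span {v1, v2, v3, v4} = UNIV"

definition symplectic_basis :: "real^4^4 \<Rightarrow> real^4 \<Rightarrow> real^4 \<Rightarrow> real^4 \<Rightarrow> real^4 \<Rightarrow> bool" where
  "symplectic_basis A v1 v2 v3 v4 \<longleftrightarrow> is_basis4 v1 v2 v3 v4 \<and>
     bform A v1 v2 = 1 \<and> bform A v1 v3 = 0 \<and> bform A v1 v4 = 0 \<and>
     bform A v2 v3 = 0 \<and> bform A v2 v4 = 0 \<and> bform A v3 v4 = 1"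

definition basis_values :: "real^4 \<Rightarrow> real^4 \<Rightarrow> real^4 \<Rightarrow> real^4 \<Rightarrow> real list" where
  "basis_values v1 v2 v3 v4 = [bform Jmat v1 v2, bform Jmat v1 v3, bform Jmat v1 v4,
                               bform Jmat v2 v3, bform Jmat v2 v4, bform Jmat v3 v4]"

end

theory Submission
  imports Defs
begin

definition rmat :: "real^4 \<Rightarrow> real^4 \<Rightarrow> real^4 \<Rightarrow> real^4 \<Rightarrow> real^4^4" where
  "rmat v1 v2 v3 v4 = (\<chi> i. if i = 1 then v1 else if i = 2 then v2 else if i = 3 then v3 else v4)"

lemma entry_bform:
  fixes R M :: "real^4^4"
  shows "(R ** M ** transpose R) $ i $ j = bform M (R $ i) (R $ j)"
proof -
  have l: "(R ** M ** transpose R) $ i $ j = (\<Sum>k\<in>UNIV. \<Sum>l\<in>UNIV. R$i$l * M$l$k * R$j$k)"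
    by (simp add: matrix_matrix_mult_def transpose_def sum_distrib_right)
  have r: "bform M (R $ i) (R $ j) = (\<Sum>l\<in>UNIV. \<Sum>k\<in>UNIV. R$i$l * M$l$k * R$j$k)"
    by (simp add: bform_def inner_vec_def matrix_vector_mult_def sum_distrib_left mult.assoc)
  show ?thesis unfolding l r by (rule sum.swap)
qed

lemma rmat_nth: "rmat v1 v2 v3 v4 $ 1 = v1" "rmat v1 v2 v3 v4 $ 2 = v2"
  "rmat v1 v2 v3 v4 $ 3 = v3" "rmat v1 v2 v3 v4 $ 4 = v4"
  unfolding rmat_def by simp_all

lemma rows_range: "rows (R::real^4^4) = range (\<lambda>i. R $ i)"
  unfolding rows_def row_def by (simp add: vec_nth_inverse full_SetCompr_eq)

lemma rows_rmat: "rows (rmat v1 v2 v3 v4) = {v1, v2, v3, v4}"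
  unfolding rows_range UNIV_4 by (simp add: rmat_nth)

lemma neg_mv: "(- A) *v (y::real^4) = - (A *v y)"
  by (simp add: vec_eq_iff matrix_vector_mult_def sum_negf)

lemma skew_bform:
  assumes "transpose A = - (A::real^4^4)"
  shows "bform A y x = - bform A x y" "bform A x x = 0"
proof -
  have g: "bform A y x = - bform A x y" for x y
  proof -
    have "bform A y x = (y v* A) \<bullet> x"
      unfolding bform_def by (simp add: dot_lmul_matrix)
    also have "\<dots> = (transpose A *v y) \<bullet> x" by simp
    also have "\<dots> = - ((A *v y) \<bullet> x)" using assms by (simp add: neg_mv)
    also have "\<dots> = - bform A x y" unfolding bform_def by (simp add: inner_commute)
    finally show ?thesis .
  qed
  show "bform A y x = - bform A x y" by (rule g)
  show "bform A x x = 0" using g[of x x] by simp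
qed

lemma J_nth: "Jmat $ 1 $ 1 = 0" "Jmat $ 1 $ 2 = 1" "Jmat $ 1 $ 3 = 0" "Jmat $ 1 $ 4 = 0"
  "Jmat $ 2 $ 1 = -1" "Jmat $ 2 $ 2 = 0" "Jmat $ 2 $ 3 = 0" "Jmat $ 2 $ 4 = 0"
  "Jmat $ 3 $ 1 = 0" "Jmat $ 3 $ 2 = 0" "Jmat $ 3 $ 3 = 0" "Jmat $ 3 $ 4 = 1"
  "Jmat $ 4 $ 1 = 0" "Jmat $ 4 $ 2 = 0" "Jmat $ 4 $ 3 = -1" "Jmat $ 4 $ 4 = 0"
  unfolding Jmat_def by simp_all

lemma mat_eq4: "(M::real^4^4) = N \<longleftrightarrow> (\<forall>i j. M $ i $ j = N $ i $ j)"
  by (simp add: vec_eq_iff)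

lemma symp_J:
  assumes "transpose A = - A" "symplectic_basis A v1 v2 v3 v4"
  shows "rmat v1 v2 v3 v4 ** A ** transpose (rmat v1 v2 v3 v4) = Jmat"
proof -
  note sk = skew_bform[OF assms(1)]
  show ?thesis
  using assms(2) sk(2) sk(1)[of v1 v2] sk(1)[of v1 v3] sk(1)[of v1 v4] sk(1)[of v2 v3]
    sk(1)[of v2 v4] sk(1)[of v3 v4]
  unfolding symplectic_basis_def mat_eq4 forall_4 entry_bform rmat_nth J_nth
  by simp
qed

lemma left_inv:
  assumes "symplectic_basis A v1 v2 v3 v4"
  shows "\<exists>Q. Q ** rmat v1 v2 v3 v4 = mat 1"
  using assms unfolding symplectic_basis_def is_basis4_def
  by (simp add: matrix_left_invertible_span_rows rows_rmat)

lemma J_skew: "transpose Jmat = - Jmat"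
  unfolding mat_eq4 forall_4 transpose_def by (simp add: J_nth)

lemma J_eq:
  assumes "basis_values v1 v2 v3 v4 = basis_values w1 w2 w3 w4"
  shows "rmat v1 v2 v3 v4 ** Jmat ** transpose (rmat v1 v2 v3 v4) =
         rmat w1 w2 w3 w4 ** Jmat ** transpose (rmat w1 w2 w3 w4)"
proof -
  note sk = skew_bform[OF J_skew]
  show ?thesis
  using assms sk(2) sk(1)[of v1 v2] sk(1)[of v1 v3] sk(1)[of v1 v4] sk(1)[of v2 v3]
    sk(1)[of v2 v4] sk(1)[of v3 v4]
    sk(1)[of w1 w2] sk(1)[of w1 w3] sk(1)[of w1 w4] sk(1)[of w2 w3]
    sk(1)[of w2 w4] sk(1)[of w3 w4]
  unfolding basis_values_def mat_eq4 forall_4 entry_bform rmat_nth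
  by simp
qed

theorem mainTheorem10:
  fixes A B :: "real^4^4" and v1 v2 v3 v4 w1 w2 w3 w4 :: "real^4"
  assumes "A \<in> S4" and "B \<in> S4"
    and "symplectic_basis A v1 v2 v3 v4"
    and "symplectic_basis B w1 w2 w3 w4"
    and "basis_values v1 v2 v3 v4 = basis_values w1 w2 w3 w4"
  shows "\<exists>P \<in> Sp4. A = transpose P ** B ** P"
proof -
  define R where "R = rmat v1 v2 v3 v4"
  define R' where "R' = rmat w1 w2 w3 w4"
  have hA: "R ** A ** transpose R = Jmat" using symp_J assms(1,3) unfolding S4_def R_def by blast
  have hB: "R' ** B ** transpose R' = Jmat" using symp_J assms(2,4) unfolding S4_def R'_def by blast
  have hJ: "R ** Jmat ** transpose R = R' ** Jmat ** transpose R'" using J_eq[OF assms(5)] unfolding R_def R'_def .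
  obtain Q where Q: "Q ** R = mat 1" using left_inv[OF assms(3)] unfolding R_def by blast
  have Qt: "transpose R ** transpose Q = mat 1"
    by (metis Q matrix_transpose_mul transpose_mat)
  define P where "P = transpose R' ** transpose Q"
  have tP: "transpose P = Q ** R'" unfolding P_def by (simp add: matrix_transpose_mul)
  have "transpose P ** B ** P = Q ** (R' ** B ** transpose R') ** transpose Q"
    unfolding tP unfolding P_def by (simp add: matrix_mul_assoc)
  also have "\<dots> = Q ** (R ** A ** transpose R) ** transpose Q" using hA hB by simp
  also have "\<dots> = (Q ** R) ** A ** (transpose R ** transpose Q)" by (simp add: matrix_mul_assoc)
  also have "\<dots> = A" using Q Qt by simp
  finally have 1: "A = transpose P ** B ** P" by simp
  have "transpose P ** Jmat ** P = Q ** (R' ** Jmat ** transpose R') ** transpose Q"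
    unfolding tP unfolding P_def by (simp add: matrix_mul_assoc)
  also have "\<dots> = Q ** (R ** Jmat ** transpose R) ** transpose Q" using hJ by simp
  also have "\<dots> = (Q ** R) ** Jmat ** (transpose R ** transpose Q)" by (simp add: matrix_mul_assoc)
  also have "\<dots> = Jmat" using Q Qt by simp
  finally have "P \<in> Sp4" unfolding Sp4_def by simp
  with 1 show ?thesis by blast
qed

end
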